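(* Let $X,Y$ be irreducible sofic shifts and let $f:X\to Y$ be a finite-to-one factor map which is right-continuing almost-everywhere with some retract $n\ge0$. Then $f$ is right-closing almost-everywhere.
   Context: Subshifts are closed shift-invariant subsets of $A^{\mathbb Z}$, $A$ finite, with shift $\sigma(x)_i=x_{i+1}$; a factor map is a continuous, shift-commuting, onto map; finite-to-one means every point has finitely many preimages. A point $x\in X$ is left-transitive in $X$ if $\{\sigma^i(x): i\le 0\}$ is dense in $X$. Points $x,y$ are left-asymptotic if there is $n$ with $x_i=y_i$ for all $i\le n$. A factor map $f:X\to Y$ is right-closing almost-everywhere if for all left-transitive $x,y\in X$ that are left-asymptotic, $f(x)=f(y)$ implies $x=y$. For an integer $n\ge0$, $f$ is right-continuing almost-everywhere with retract $n$ if for every $x\in X$ and every left-transitive $y\in Y$ with $f(x)_i=y_i$ for all $i\le n$, there exists $x'\in X$ with $x'_i=x_i$ for all $i\le 0$ and $f(x')=y$. *)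

theory Defs
  imports Main
begin

text \<open>The topology is the product topology of discrete spaces; all topological notions below
  are written out explicitly in terms of agreement on central windows [-m,m].\<close>

definition shift :: "(int \<Rightarrow> 'a) \<Rightarrow> (int \<Rightarrow> 'a)" ("\<sigma>") where
  "\<sigma> x = (\<lambda>i. x (i + 1))"

definition shiftn :: "int \<Rightarrow> (int \<Rightarrow> 'a) \<Rightarrow> (int \<Rightarrow> 'a)" where
  "shiftn k x = (\<lambda>i. x (i + k))"

definition agree :: "nat \<Rightarrow> (int \<Rightarrow> 'a) \<Rightarrow> (int \<Rightarrow> 'a) \<Rightarrow> bool" where
  "agree m x y \<longleftrightarrow> (\<forall>i. \<bar>i\<bar> \<le> int m \<longrightarrow> x i = y i)"

definition closed_set :: "(int \<Rightarrow> 'a) set \<Rightarrow> bool" where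
  "closed_set X \<longleftrightarrow> (\<forall>x. (\<forall>m. \<exists>y\<in>X. agree m y x) \<longrightarrow> x \<in> X)"

definition subshift :: "(int \<Rightarrow> 'a::finite) set \<Rightarrow> bool" where
  "subshift X \<longleftrightarrow> closed_set X \<and> \<sigma> ` X = X"

definition occurs_at :: "'a list \<Rightarrow> (int \<Rightarrow> 'a) \<Rightarrow> int \<Rightarrow> bool" where
  "occurs_at w x i \<longleftrightarrow> (\<forall>k < length w. x (i + int k) = w ! k)"

definition lang :: "(int \<Rightarrow> 'a) set \<Rightarrow> 'a list set" where
  "lang X = {w. \<exists>x\<in>X. \<exists>i. occurs_at w x i}"

definition irreducible_shift :: "(int \<Rightarrow> 'a::finite) set \<Rightarrow> bool" where
  "irreducible_shift X \<longleftrightarrow> subshift X \<and>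
     (\<forall>u\<in>lang X. \<forall>w\<in>lang X. \<exists>v. u @ v @ w \<in> lang X)"

text \<open>Sofic shift: the set of label sequences of bi-infinite walks in a finite edge-labelled
  graph (vertices are natural numbers, edges are triples (source, label, target)).\<close>
definition sofic :: "(int \<Rightarrow> 'a::finite) set \<Rightarrow> bool" where
  "sofic X \<longleftrightarrow> subshift X \<and>
     (\<exists>E :: (nat \<times> 'a \<times> nat) set. finite E \<and>
        X = {x. \<exists>v :: int \<Rightarrow> nat. \<forall>i. (v i, x i, v (i + 1)) \<in> E})"

definition continuous_map_on :: "(int \<Rightarrow> 'a) set \<Rightarrow> ((int \<Rightarrow> 'a) \<Rightarrow> (int \<Rightarrow> 'b)) \<Rightarrow> bool" where
  "continuous_map_on X f \<longleftrightarrow>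
     (\<forall>x\<in>X. \<forall>n. \<exists>m. \<forall>y\<in>X. agree m y x \<longrightarrow> agree n (f y) (f x))"

definition factor_map ::
  "((int \<Rightarrow> 'a::finite) \<Rightarrow> (int \<Rightarrow> 'b::finite)) \<Rightarrow> (int \<Rightarrow> 'a) set \<Rightarrow> (int \<Rightarrow> 'b) set \<Rightarrow> bool" where
  "factor_map f X Y \<longleftrightarrow> continuous_map_on X f \<and> (\<forall>x\<in>X. f (\<sigma> x) = \<sigma> (f x)) \<and> f ` X = Y"

definition finite_to_one :: "((int \<Rightarrow> 'a) \<Rightarrow> (int \<Rightarrow> 'b)) \<Rightarrow> (int \<Rightarrow> 'a) set \<Rightarrow> (int \<Rightarrow> 'b) set \<Rightarrow> bool" where
  "finite_to_one f X Y \<longleftrightarrow> (\<forall>y\<in>Y. finite {x\<in>X. f x = y})"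

text \<open>x is left-transitive in X: {sigma^i x | i <= 0} is dense in X.\<close>
definition left_transitive :: "(int \<Rightarrow> 'a) set \<Rightarrow> (int \<Rightarrow> 'a) \<Rightarrow> bool" where
  "left_transitive X x \<longleftrightarrow> (\<forall>z\<in>X. \<forall>m. \<exists>i\<le>0. agree m (shiftn i x) z)"

definition left_asymptotic :: "(int \<Rightarrow> 'a) \<Rightarrow> (int \<Rightarrow> 'a) \<Rightarrow> bool" where
  "left_asymptotic x y \<longleftrightarrow> (\<exists>n. \<forall>i\<le>n. x i = y i)"

definition right_closing_ae ::
  "((int \<Rightarrow> 'a) \<Rightarrow> (int \<Rightarrow> 'b)) \<Rightarrow> (int \<Rightarrow> 'a) set \<Rightarrow> bool" where
  "right_closing_ae f X \<longleftrightarrow>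
     (\<forall>x\<in>X. \<forall>y\<in>X. left_transitive X x \<longrightarrow> left_transitive X y \<longrightarrow>
        left_asymptotic x y \<longrightarrow> f x = f y \<longrightarrow> x = y)"

definition right_continuing_ae ::
  "((int \<Rightarrow> 'a) \<Rightarrow> (int \<Rightarrow> 'b)) \<Rightarrow> (int \<Rightarrow> 'a) set \<Rightarrow> (int \<Rightarrow> 'b) set \<Rightarrow> nat \<Rightarrow> bool" where
  "right_continuing_ae f X Y n \<longleftrightarrow>
     (\<forall>x\<in>X. \<forall>y\<in>Y. left_transitive Y y \<longrightarrow> (\<forall>i\<le>int n. f x i = y i) \<longrightarrow>
        (\<exists>x'\<in>X. (\<forall>i\<le>0. x' i = x i) \<and> f x' = y))"

end

theory Submission
  imports Defs
begin


lemma shiftn_apply: "shiftn k x i = x (i + k)"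
  by (simp add: shiftn_def)

lemma shift_eq: "\<sigma> x = shiftn 1 x"
  by (simp add: shift_def shiftn_def)

lemma shiftn_shiftn[simp]: "shiftn a (shiftn b x) = shiftn (a + b) x"
  by (rule ext) (simp add: shiftn_apply algebra_simps)

lemma shiftn_0[simp]: "shiftn 0 x = x"
  by (rule ext) (simp add: shiftn_apply)

lemma subshift_shiftn:
  assumes ss: "subshift X" and u: "u \<in> X" shows "shiftn k u \<in> X"
proof -
  have up: "shiftn 1 w \<in> X" if "w \<in> X" for w
    using ss that unfolding subshift_def shift_eq by blast
  have dn: "shiftn (-1) w \<in> X" if "w \<in> X" for w
  proof -
    from ss that have "w \<in> \<sigma> ` X" unfolding subshift_def by simp
    then obtain q where q: "q \<in> X" "w = shiftn 1 q" unfolding shift_eq by blast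
    have "shiftn (-1) w = q" using q(2) by simp
    with q show ?thesis by simp
  qed
  show ?thesis
  proof (induction k rule: int_induct[where k=0])
    case base then show ?case using u by simp
  next
    case (step1 i)
    then have "shiftn 1 (shiftn i u) \<in> X" using up by blast
    then show ?case by (simp add: add.commute)
  next
    case (step2 i)
    then have "shiftn (-1) (shiftn i u) \<in> X" using dn by blast
    then show ?case by simp
  qed
qed

lemma factor_shiftn:
  assumes ss: "subshift X" and fm: "factor_map f X Y" and u: "u \<in> X"
  shows "f (shiftn k u) = shiftn k (f u)"
proof (induction k rule: int_induct[where k=0])
  case base then show ?case by simp
next
  case (step1 i)
  have "f (shiftn 1 (shiftn i u)) = shiftn 1 (f (shiftn i u))"
    using fm subshift_shiftn[OF ss u] unfolding factor_map_def shift_eq by blast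
  then show ?case using step1 by (metis add.commute shiftn_shiftn)
next
  case (step2 i)
  have w: "shiftn (i - 1) u \<in> X" using subshift_shiftn[OF ss u] .
  have "f (shiftn 1 (shiftn (i - 1) u)) = shiftn 1 (f (shiftn (i - 1) u))"
    using fm w unfolding factor_map_def shift_eq by blast
  then have "f (shiftn i u) = shiftn 1 (f (shiftn (i - 1) u))" by simp
  then have "shiftn (-1) (f (shiftn i u)) = f (shiftn (i - 1) u)" by simp
  then show ?case using step2 by simp
qed

lemma unif_cont0:
  fixes X :: "(int \<Rightarrow> 'a::finite) set" and f :: "(int \<Rightarrow> 'a) \<Rightarrow> (int \<Rightarrow> 'b)"
  assumes cl: "closed_set X" and ct: "continuous_map_on X f"
  shows "\<exists>r. \<forall>u\<in>X. \<forall>w\<in>X. agree r u w \<longrightarrow> f u 0 = f w 0"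
proof (rule ccontr)
  assume "\<not> ?thesis"
  then have h0: "\<forall>m. \<exists>u\<in>X. \<exists>w\<in>X. agree m u w \<and> f u 0 \<noteq> f w 0" by blast
  have "\<forall>m. \<exists>uw. fst uw \<in> X \<and> snd uw \<in> X \<and> agree m (fst uw) (snd uw) \<and> f (fst uw) 0 \<noteq> f (snd uw) 0"
  proof
    fix m
    from h0 obtain u w where "u \<in> X" "w \<in> X" "agree m u w" "f u 0 \<noteq> f w 0" by blast
    then show "\<exists>uw. fst uw \<in> X \<and> snd uw \<in> X \<and> agree m (fst uw) (snd uw) \<and> f (fst uw) 0 \<noteq> f (snd uw) 0"
      by (intro exI[of _ "(u, w)"]) simp
  qed
  then obtain UW where UW0: "\<forall>m. fst (UW m) \<in> X \<and> snd (UW m) \<in> X \<and> agree m (fst (UW m)) (snd (UW m)) \<and> f (fst (UW m)) 0 \<noteq> f (snd (UW m)) 0"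
    using choice[of "\<lambda>m uw. fst uw \<in> X \<and> snd uw \<in> X \<and> agree m (fst uw) (snd uw) \<and> f (fst uw) 0 \<noteq> f (snd uw) 0"] by blast
  define U where "U m = fst (UW m)" for m
  define W where "W m = snd (UW m)" for m
  have UW: "\<And>m. U m \<in> X \<and> W m \<in> X \<and> agree m (U m) (W m) \<and> f (U m) 0 \<noteq> f (W m) 0"
    using UW0 unfolding U_def W_def by blast
  have extB: "\<exists>B. B \<subseteq> A \<and> infinite B \<and> (\<forall>k\<in>B. \<forall>k'\<in>B. agree m (U k) (U k'))"
    if infA: "infinite A" for A :: "nat set" and m
  proof -
    let ?L = "[- int m .. int m]"
    let ?g = "\<lambda>k. map (U k) ?L"
    have "?g ` A \<subseteq> {xs. set xs \<subseteq> UNIV \<and> length xs = length ?L}" by auto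
    moreover have "finite {xs. set xs \<subseteq> (UNIV::'a set) \<and> length xs = length ?L}"
      by (rule finite_lists_length_eq) simp
    ultimately have fg: "finite (?g ` A)" by (rule finite_subset)
    obtain a0 where a0: "a0 \<in> A" "infinite {a\<in>A. ?g a = ?g a0}"
      using pigeonhole_infinite[of A ?g, OF infA fg] by blast
    show ?thesis
    proof (intro exI conjI)
      show "{a\<in>A. ?g a = ?g a0} \<subseteq> A" by blast
      show "infinite {a\<in>A. ?g a = ?g a0}" using a0 by blast
      show "\<forall>k\<in>{a\<in>A. ?g a = ?g a0}. \<forall>k'\<in>{a\<in>A. ?g a = ?g a0}. agree m (U k) (U k')"
      proof (intro ballI)
        fix k k' assume "k \<in> {a\<in>A. ?g a = ?g a0}" "k' \<in> {a\<in>A. ?g a = ?g a0}"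
        then have "?g k = ?g k'" by simp
        then have "\<forall>j\<in>set ?L. U k j = U k' j" by (simp add: map_eq_conv)
        then show "agree m (U k) (U k')" unfolding agree_def by (simp add: abs_le_iff)
      qed
    qed
  qed
  define ex where "ex A m = (SOME B. B \<subseteq> A \<and> infinite B \<and> (\<forall>k\<in>B. \<forall>k'\<in>B. agree m (U k) (U k')))" for A m
  have ex: "ex A m \<subseteq> A \<and> infinite (ex A m) \<and> (\<forall>k\<in>ex A m. \<forall>k'\<in>ex A m. agree m (U k) (U k'))"
    if "infinite A" for A m
    unfolding ex_def by (rule someI_ex) (rule extB[OF that])
  define S where "S = rec_nat (ex UNIV 0) (\<lambda>m A. ex A (Suc m))"
  have S0: "S 0 = ex UNIV 0" and SS: "\<And>m. S (Suc m) = ex (S m) (Suc m)" by (simp_all add: S_def)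
  have Sp: "infinite (S m) \<and> (\<forall>k\<in>S m. \<forall>k'\<in>S m. agree m (U k) (U k'))" for m
  proof (induction m)
    case 0 then show ?case using ex[of UNIV 0] S0 by simp
  next
    case (Suc m) then show ?case using ex[of "S m" "Suc m"] SS by simp
  qed
  have Ssub: "S (Suc m) \<subseteq> S m" for m using ex[of "S m" "Suc m"] SS Sp by simp
  have Smono: "m \<le> m' \<Longrightarrow> S m' \<subseteq> S m" for m m'
    by (rule lift_Suc_antimono_le[of S]) (use Ssub in auto)
  have Sne: "S m \<noteq> {}" for m using Sp[of m] by auto
  define p where "p = (\<lambda>j. U (SOME k. k \<in> S (nat \<bar>j\<bar>)) j)"
  have pS: "agree m (U k) p" if "k \<in> S m" for k m
    unfolding agree_def
  proof (intro allI impI)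
    fix j :: int assume j: "\<bar>j\<bar> \<le> int m"
    let ?m' = "nat \<bar>j\<bar>"
    let ?k' = "SOME k. k \<in> S ?m'"
    have k': "?k' \<in> S ?m'" using Sne[of ?m'] by (simp add: some_in_eq)
    have "?m' \<le> m" using j by simp
    then have "k \<in> S ?m'" using Smono[of ?m' m] that by blast
    then have "agree ?m' (U k) (U ?k')" using Sp[of ?m'] k' by blast
    then have "U k j = U ?k' j" unfolding agree_def by simp
    then show "U k j = p j" by (simp add: p_def)
  qed
  have pX: "p \<in> X"
  proof -
    have "\<forall>m. \<exists>y\<in>X. agree m y p"
    proof
      fix m obtain k where "k \<in> S m" using Sne[of m] by blast
      then show "\<exists>y\<in>X. agree m y p" using pS UW by blast
    qed
    then show ?thesis using cl unfolding closed_set_def by blast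
  qed
  obtain M where M: "\<forall>q\<in>X. agree M q p \<longrightarrow> agree 0 (f q) (f p)"
    using ct pX unfolding continuous_map_on_def by blast
  obtain k where k: "k \<in> S M" "k \<ge> M"
  proof -
    have "\<not> S M \<subseteq> {..<M}" using Sp[of M] finite_subset[of "S M" "{..<M}"] by auto
    then obtain k0 where "k0 \<in> S M" "\<not> k0 < M" by blast
    then show ?thesis using that by simp
  qed
  have a1: "agree M (U k) p" using pS k by blast
  have a2: "agree M (W k) p"
    using a1 UW[of k] k(2) unfolding agree_def by (metis of_nat_mono order_trans)
  have "f (U k) 0 = f p 0" using M a1 UW[of k] unfolding agree_def by auto
  moreover have "f (W k) 0 = f p 0" using M a2 UW[of k] unfolding agree_def by auto
  ultimately show False using UW[of k] by simp
qed



lemma blk: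
  assumes ss: "subshift X" and fm: "factor_map f X Y"
    and r: "\<forall>u\<in>X. \<forall>w\<in>X. agree r u w \<longrightarrow> f u 0 = f w 0"
    and u: "u \<in> X" and w: "w \<in> X"
    and eq: "\<And>i. j - int r \<le> i \<Longrightarrow> i \<le> j + int r \<Longrightarrow> u i = w (i + e)"
  shows "f u j = f w (j + e)"
proof -
  have "agree r (shiftn j u) (shiftn (j + e) w)"
    unfolding agree_def shiftn_apply
  proof (intro allI impI)
    fix i :: int assume "\<bar>i\<bar> \<le> int r"
    then have "u (i + j) = w (i + j + e)" using eq[of "i + j"] by auto
    then show "u (i + j) = w (i + (j + e))" by (simp add: algebra_simps)
  qed
  then have "f (shiftn j u) 0 = f (shiftn (j + e) w) 0"
    using r subshift_shiftn[OF ss u] subshift_shiftn[OF ss w] by blast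
  then show ?thesis
    using factor_shiftn[OF ss fm u, of j] factor_shiftn[OF ss fm w, of "j + e"]
    by (simp add: shiftn_apply)
qed

lemma lt_strong:
  assumes ss: "subshift X" and x: "x \<in> X" and lt: "left_transitive X x"
  shows "\<exists>e. \<alpha> + e < B \<and> (\<forall>i. \<alpha> \<le> i \<and> i \<le> \<beta> \<longrightarrow> x (i + e) = x i)"
proof -
  define t where "t = \<alpha> - B + 1"
  define m where "m = nat (max \<bar>\<alpha> - t\<bar> \<bar>\<beta> - t\<bar>)"
  have "shiftn t x \<in> X" using subshift_shiftn[OF ss x] .
  with lt obtain i where i: "i \<le> 0" "agree m (shiftn i x) (shiftn t x)"
    unfolding left_transitive_def by blast
  show ?thesis
  proof (intro exI[of _ "i - t"] conjI allI impI)
    show "\<alpha> + (i - t) < B" using i t_def by simp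
    fix q assume q: "\<alpha> \<le> q \<and> q \<le> \<beta>"
    then have "\<bar>q - t\<bar> \<le> int m" unfolding m_def by auto
    then have "x ((q - t) + i) = x ((q - t) + t)" using i(2) unfolding agree_def shiftn_apply by blast
    then show "x (q + (i - t)) = x q" by (simp add: algebra_simps)
  qed
qed

lemma lt_shift:
  assumes ss: "subshift X" and x: "x \<in> X" and lt: "left_transitive X x"
  shows "left_transitive X (shiftn t x)"
  unfolding left_transitive_def
proof (intro ballI allI)
  fix w m assume w: "w \<in> X"
  obtain i0 where i0: "i0 \<le> 0" "agree m (shiftn i0 x) w"
    using lt w unfolding left_transitive_def by blast
  obtain e where e: "(i0 - int m) + e < t - int m + 1"
    "\<forall>q. i0 - int m \<le> q \<and> q \<le> i0 + int m \<longrightarrow> x (q + e) = x q"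
    using lt_strong[OF ss x lt, where \<alpha>="i0 - int m" and B="t - int m + 1" and \<beta>="i0 + int m"] by blast
  show "\<exists>i\<le>0. agree m (shiftn i (shiftn t x)) w"
  proof (intro exI[of _ "i0 + e - t"] conjI)
    show "i0 + e - t \<le> 0" using e(1) by simp
    show "agree m (shiftn (i0 + e - t) (shiftn t x)) w"
      unfolding agree_def
    proof (intro allI impI)
      fix j :: int assume j: "\<bar>j\<bar> \<le> int m"
      have "x ((j + i0) + e) = x (j + i0)" using e(2)[rule_format, of "j + i0"] j by (simp add: abs_le_iff)
      moreover have "x (j + i0) = w j" using i0(2) j unfolding agree_def shiftn_apply by blast
      moreover have "shiftn (i0 + e - t) (shiftn t x) j = x ((j + i0) + e)"
        by (simp add: shiftn_apply algebra_simps)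
      ultimately show "shiftn (i0 + e - t) (shiftn t x) j = w j" by simp
    qed
  qed
qed

lemma lt_image:
  assumes ss: "subshift X" and fm: "factor_map f X Y"
    and r: "\<forall>u\<in>X. \<forall>w\<in>X. agree r u w \<longrightarrow> f u 0 = f w 0"
    and x: "x \<in> X" and lt: "left_transitive X x"
  shows "left_transitive Y (f x)"
  unfolding left_transitive_def
proof (intro ballI allI)
  fix w m assume "w \<in> Y"
  then obtain p where p: "p \<in> X" "w = f p" using fm unfolding factor_map_def by blast
  obtain i where i: "i \<le> 0" "agree (m + r) (shiftn i x) p"
    using lt p unfolding left_transitive_def by blast
  have six: "shiftn i x \<in> X" using subshift_shiftn[OF ss x] .
  have "agree m (f (shiftn i x)) (f p)"
    unfolding agree_def
  proof (intro allI impI)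
    fix j :: int assume j: "\<bar>j\<bar> \<le> int m"
    show "f (shiftn i x) j = f p j"
      using blk[OF ss fm r six p(1), of j 0] i(2) j unfolding agree_def by auto
  qed
  then show "\<exists>i\<le>0. agree m (shiftn i (f x)) w"
    using i(1) p(2) factor_shiftn[OF ss fm x, of i] by auto
qed

lemma first_diff:
  fixes x y :: "int \<Rightarrow> 'a"
  assumes la: "\<forall>i\<le>N0. x i = y i" and ne: "x \<noteq> y"
  shows "\<exists>D. (\<forall>i<D. x i = y i) \<and> x D \<noteq> y D"
proof -
  obtain k where k: "x k \<noteq> y k" using ne by blast
  then have kN: "k > N0" using la by (metis not_le)
  define P where "P t = (x (N0 + 1 + int t) \<noteq> y (N0 + 1 + int t))" for t
  have "P (nat (k - N0 - 1))" using k kN unfolding P_def by simp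
  then have ex: "\<exists>t. P t" by blast
  define t0 where "t0 = (LEAST t. P t)"
  have Pt0: "P t0" unfolding t0_def using ex by (rule LeastI_ex)
  show ?thesis
  proof (intro exI conjI allI impI)
    show "x (N0 + 1 + int t0) \<noteq> y (N0 + 1 + int t0)" using Pt0 unfolding P_def .
    fix i assume i: "i < N0 + 1 + int t0"
    show "x i = y i"
    proof (cases "i \<le> N0")
      case True then show ?thesis using la by blast
    next
      case False
      then have "nat (i - N0 - 1) < t0" using i by auto
      then have "\<not> P (nat (i - N0 - 1))" unfolding t0_def by (rule not_less_Least)
      then show ?thesis using False unfolding P_def by simp
    qed
  qed
qed



lemma splice:
  fixes X :: "(int \<Rightarrow> 'a::finite) set" and Y :: "(int \<Rightarrow> 'b::finite) set"
    and f :: "(int \<Rightarrow> 'a) \<Rightarrow> (int \<Rightarrow> 'b)"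
  assumes ss: "subshift X" and fm: "factor_map f X Y"
    and r: "\<forall>u\<in>X. \<forall>w\<in>X. agree r u w \<longrightarrow> f u 0 = f w 0"
    and rc: "right_continuing_ae f X Y n"
    and Xeq: "X = {x. \<exists>v :: int \<Rightarrow> nat. \<forall>i. (v i, x i, v (i + 1)) \<in> E}"
    and x: "x \<in> X" and y: "y \<in> X" and ltx: "left_transitive X x" and fxy: "f x = f y"
    and xy: "\<forall>i<D. x i = y i" and xyD: "x D \<noteq> y D"
    and vy: "\<forall>i. (vy i, y i, vy (i + 1)) \<in> E"
    and a: "a + 2 * int r < D" and ab: "bb < a"
    and occ: "\<forall>i. a - 2 * int r \<le> i \<and> i \<le> D + int n + 2 * int r \<longrightarrow> x (i - (a - bb)) = x i"
    and vab: "vy (bb + 1) = vy (a + 1)"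
  shows "\<exists>w. w \<in> X \<and> f w = f x \<and> (\<forall>i < D - (a - bb). w i = x i) \<and> w (D - (a - bb)) \<noteq> x (D - (a - bb))"
proof -
  define d where "d = a - bb"
  define s where "s = D - d"
  define R where "R = int r"
  define W where "W = (\<lambda>i. if i \<le> bb then y i else y (i + d))"
  have d0: "d > 0" using ab d_def by simp
  have occ': "x (i - d) = x i" if "a - 2 * R \<le> i" "i \<le> D + int n + 2 * R" for i
    using occ that unfolding d_def R_def by blast
  have WX: "W \<in> X"
  proof -
    define om where "om = (\<lambda>i. if i \<le> bb then vy i else vy (i + d))"
    have "\<forall>i. (om i, W i, om (i+1)) \<in> E"
    proof
      fix i
      consider "i < bb" | "i = bb" | "i > bb" by linarith
      then show "(om i, W i, om (i + 1)) \<in> E"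
      proof cases
        case 1 then show ?thesis using vy[rule_format, of i] by (simp add: om_def W_def)
      next
        case 2
        have e: "bb + 1 + d = a + 1" by (simp add: d_def)
        have "om (bb+1) = vy (bb+1)" using vab by (simp add: om_def e)
        then show ?thesis using vy[rule_format, of bb] 2 by (simp add: om_def W_def)
      next
        case 3
        have e: "i + 1 + d = i + d + 1" by simp
        show ?thesis using vy[rule_format, of "i + d"] 3 by (simp add: om_def W_def e)
      qed
    qed
    then show ?thesis unfolding Xeq by blast
  qed
  have sbb: "s - 2 * R > bb" using a unfolding s_def d_def R_def by simp
  have c1: "W i = x i" if i: "i < s" for i
  proof (cases "i \<le> bb")
    case True then have "i < D" using ab a unfolding R_def by simp
    then show ?thesis using xy True by (simp add: W_def)
  next
    case False
    then have "W i = y (i + d)" by (simp add: W_def)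
    also have "\<dots> = x (i + d)" using xy i unfolding s_def by simp
    also have "\<dots> = x i"
    proof -
      have "a - 2 * R \<le> i + d" "i + d \<le> D + int n + 2 * R"
        using False i unfolding s_def d_def R_def by simp_all
      from occ'[OF this] show ?thesis by simp
    qed
    finally show ?thesis .
  qed
  have c2: "W s \<noteq> x s"
  proof -
    have "W s = y D" using sbb unfolding W_def s_def R_def by simp
    moreover have "x s = x D"
      using occ'[of D] a unfolding s_def R_def by simp
    ultimately show ?thesis using xyD by simp
  qed
  have c3: "f W j = f x j" if j: "j \<le> s + int n" for j
  proof (cases "j + R < s")
    case True
    have "f W j = f x (j + 0)"
      by (rule blk[OF ss fm r WX x]) (use c1 True R_def in auto)
    then show ?thesis by simp
  next
    case False
    have "f W j = f y (j + d)"
    proof (rule blk[OF ss fm r WX y])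
      fix i assume "j - int r \<le> i" "i \<le> j + int r"
      then have "i > bb" using False sbb R_def by simp
      then show "W i = y (i + d)" by (simp add: W_def)
    qed
    also have "\<dots> = f x (j + d)" using fxy by simp
    also have "\<dots> = f x ((j + d) + (- d))"
    proof (rule blk[OF ss fm r x x])
      fix i assume i: "j + d - int r \<le> i" "i \<le> j + d + int r"
      have "a - 2 * R \<le> i" "i \<le> D + int n + 2 * R"
        using i False j a unfolding s_def R_def d_def by simp_all
      from occ'[OF this] show "x i = x (i + - d)" by simp
    qed
    finally show ?thesis by simp
  qed
  have sWX: "shiftn s W \<in> X" using subshift_shiftn[OF ss WX] .
  have sxX: "shiftn s x \<in> X" using subshift_shiftn[OF ss x] .
  have fsx: "f (shiftn s x) = shiftn s (f x)" using factor_shiftn[OF ss fm x] .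
  have szY: "shiftn s (f x) \<in> Y" using fm sxX fsx unfolding factor_map_def by force
  have ltz: "left_transitive Y (shiftn s (f x))"
    using lt_image[OF ss fm r sxX lt_shift[OF ss x ltx]] fsx by simp
  have agreeRC: "\<forall>i\<le>int n. f (shiftn s W) i = shiftn s (f x) i"
  proof (intro allI impI)
    fix i assume "i \<le> int n"
    then have "f W (i + s) = f x (i + s)" using c3 by simp
    then show "f (shiftn s W) i = shiftn s (f x) i"
      using factor_shiftn[OF ss fm WX, of s] by (simp add: shiftn_apply)
  qed
  obtain x' where x': "x' \<in> X" "\<forall>i\<le>0. x' i = shiftn s W i" "f x' = shiftn s (f x)"
    using rc sWX szY ltz agreeRC unfolding right_continuing_ae_def by blast
  define w where "w = shiftn (-s) x'"
  have wX: "w \<in> X" unfolding w_def using subshift_shiftn[OF ss x'(1)] .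
  have fw: "f w = f x" unfolding w_def using factor_shiftn[OF ss fm x'(1), of "-s"] x'(3) by simp
  have wW: "w i = W i" if "i \<le> s" for i
  proof -
    have "w i = x' (i + - s)" unfolding w_def by (simp add: shiftn_apply)
    also have "\<dots> = shiftn s W (i + - s)" using x'(2) that by simp
    also have "\<dots> = W i" by (simp add: shiftn_apply)
    finally show ?thesis .
  qed
  show ?thesis
  proof (intro exI conjI allI impI)
    show "w \<in> X" by (rule wX)
    show "f w = f x" by (rule fw)
    fix i assume "i < D - (a - bb)"
    then show "w i = x i" using wW c1 unfolding s_def d_def by simp
  next
    show "w (D - (a - bb)) \<noteq> x (D - (a - bb))" using wW[of s] c2 unfolding s_def d_def by simp
  qed
qed



theorem mainTheorem3:
  fixes X :: "(int \<Rightarrow> 'a::finite) set" and Y :: "(int \<Rightarrow> 'b::finite) set"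
    and f :: "(int \<Rightarrow> 'a) \<Rightarrow> (int \<Rightarrow> 'b)" and n :: nat
  assumes "sofic X" and "irreducible_shift X"
    and "sofic Y" and "irreducible_shift Y"
    and "factor_map f X Y" and "finite_to_one f X Y"
    and "right_continuing_ae f X Y n"
  shows "right_closing_ae f X"
proof -
  have ss: "subshift X" using assms(1) unfolding sofic_def by blast
  obtain E :: "(nat \<times> 'a \<times> nat) set" where Efin: "finite E"
    and Xeq: "X = {x. \<exists>v :: int \<Rightarrow> nat. \<forall>i. (v i, x i, v (i + 1)) \<in> E}"
    using assms(1) unfolding sofic_def by blast
  have fm: "factor_map f X Y" by fact
  have rc: "right_continuing_ae f X Y n" by fact
  obtain r where r: "\<forall>u\<in>X. \<forall>w\<in>X. agree r u w \<longrightarrow> f u 0 = f w 0"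
    using unif_cont0[of X f] ss fm unfolding subshift_def factor_map_def by blast
  show ?thesis unfolding right_closing_ae_def
  proof (intro ballI impI)
    fix x y assume x: "x \<in> X" and y: "y \<in> X" and ltx: "left_transitive X x"
      and lty: "left_transitive X y" and la: "left_asymptotic x y" and fxy: "f x = f y"
    show "x = y"
    proof (rule ccontr)
      assume ne: "x \<noteq> y"
      obtain N0 where N0: "\<forall>i\<le>N0. x i = y i" using la unfolding left_asymptotic_def by blast
      obtain D where D: "\<forall>i<D. x i = y i" "x D \<noteq> y D" using first_diff[OF N0 ne] by blast
      obtain vy where vy: "\<forall>i. (vy i, y i, vy (i + 1)) \<in> E" using y unfolding Xeq by blast
      define R where "R = int r"
      define Ep where "Ep = D + int n + 2 * R"
      have h: "\<forall>a. \<exists>e. (a - 2*R) + e < a - 2*R \<and> (\<forall>i. a - 2*R \<le> i \<and> i \<le> Ep \<longrightarrow> x (i + e) = x i)"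
      proof
        fix a show "\<exists>e. (a - 2*R) + e < a - 2*R \<and> (\<forall>i. a - 2*R \<le> i \<and> i \<le> Ep \<longrightarrow> x (i + e) = x i)"
          by (rule lt_strong[OF ss x ltx, where \<alpha>="a - 2*R" and B="a - 2*R" and \<beta>=Ep])
      qed
      obtain G where G: "\<forall>a. (a - 2*R) + G a < a - 2*R \<and> (\<forall>i. a - 2*R \<le> i \<and> i \<le> Ep \<longrightarrow> x (i + G a) = x i)"
        using choice[OF h] by blast
      define b where "b k = ((\<lambda>a. a + G a) ^^ k) (D - 2*R - 1)" for k
      have bS: "b (Suc k) = b k + G (b k)" for k by (simp add: b_def)
      have b0: "b 0 = D - 2*R - 1" by (simp add: b_def)
      have bdec: "b (Suc k) < b k" for k using G bS by force
      have smb: "strict_mono (\<lambda>k. - b k)" unfolding strict_mono_Suc_iff using bdec by simp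
      have bmono: "b k' < b k" if "k < k'" for k k'
        using strict_monoD[OF smb that] by simp
      have ble: "b k \<le> b 0" for k
        using bmono[of 0 k] by (cases k) auto
      have chain: "\<forall>i. b k - 2*R \<le> i \<and> i \<le> Ep \<longrightarrow> x (i + (b (k + Suc d') - b k)) = x i" for k d'
      proof (induction d')
        case 0
        show ?case using G bS[of k] by simp
      next
        case (Suc d')
        show ?case
        proof (intro allI impI)
          fix i assume i: "b k - 2*R \<le> i \<and> i \<le> Ep"
          define a' where "a' = b (k + Suc d')"
          define i' where "i' = i + (a' - b k)"
          have lt: "a' < b k" unfolding a'_def by (rule bmono) simp
          have i'r: "a' - 2*R \<le> i' \<and> i' \<le> Ep" using i lt unfolding i'_def by simp
          have "x (i' + G a') = x i'" using G i'r by blast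
          moreover have "x i' = x i" using Suc.IH i unfolding i'_def a'_def by blast
          moreover have "b (k + Suc (Suc d')) = a' + G a'" unfolding a'_def using bS[of "k + Suc d'"] by simp
          moreover have "i' + G a' = i + (a' + G a' - b k)" unfolding i'_def by simp
          ultimately show "x (i + (b (k + Suc (Suc d')) - b k)) = x i" by simp
        qed
      qed
      define c where "c k = vy (b k + 1)" for k
      have "range c \<subseteq> fst ` E"
      proof
        fix v assume "v \<in> range c"
        then obtain k where "v = c k" by blast
        then show "v \<in> fst ` E" using vy[rule_format, of "b k + 1"] unfolding c_def by force
      qed
      then have cfin: "finite (c ` UNIV)" using Efin finite_subset by blast
      obtain k0 where k0: "infinite {k. c k = c k0}"
        using pigeonhole_infinite[of "UNIV::nat set" c, OF infinite_UNIV_nat cfin] by auto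
      define K where "K = {k. c k = c k0 \<and> k0 < k}"
      have Kinf: "infinite K"
      proof
        assume "finite K"
        moreover have "{k. c k = c k0} \<subseteq> K \<union> {..k0}" unfolding K_def by auto
        ultimately show False using k0 finite_subset by blast
      qed
      have key: "\<exists>w. w \<in> X \<and> f w = f x \<and> (\<forall>i < D - (b k0 - b k). w i = x i) \<and> w (D - (b k0 - b k)) \<noteq> x (D - (b k0 - b k))"
        if kK: "k \<in> K" for k
      proof (rule splice[OF ss fm r rc Xeq x y ltx fxy D(1) D(2) vy])
        have kk: "k0 < k" "c k = c k0" using kK unfolding K_def by auto
        show "b k0 + 2 * int r < D" using ble[of k0] b0 unfolding R_def by simp
        show "b k < b k0" using bmono kk by blast
        show "vy (b k + 1) = vy (b k0 + 1)" using kk unfolding c_def by simp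
        have kd: "k0 + Suc (k - k0 - 1) = k" using kk by simp
        show "\<forall>i. b k0 - 2 * int r \<le> i \<and> i \<le> D + int n + 2 * int r \<longrightarrow> x (i - (b k0 - b k)) = x i"
        proof (intro allI impI)
          fix i assume "b k0 - 2 * int r \<le> i \<and> i \<le> D + int n + 2 * int r"
          then have "x (i + (b k - b k0)) = x i"
            using chain[of k0 "k - k0 - 1"] unfolding kd Ep_def R_def by blast
          moreover have "i + (b k - b k0) = i - (b k0 - b k)" by simp
          ultimately show "x (i - (b k0 - b k)) = x i" by simp
        qed
      qed
      then have "\<forall>k\<in>K. \<exists>w. w \<in> X \<and> f w = f x \<and> (\<forall>i < D - (b k0 - b k). w i = x i) \<and> w (D - (b k0 - b k)) \<noteq> x (D - (b k0 - b k))"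
        by blast
      then have "\<exists>W. \<forall>k\<in>K. W k \<in> X \<and> f (W k) = f x \<and> (\<forall>i < D - (b k0 - b k). W k i = x i) \<and> W k (D - (b k0 - b k)) \<noteq> x (D - (b k0 - b k))"
        by (rule bchoice)
      then obtain W where W: "\<forall>k\<in>K. W k \<in> X \<and> f (W k) = f x \<and> (\<forall>i < D - (b k0 - b k). W k i = x i) \<and> W k (D - (b k0 - b k)) \<noteq> x (D - (b k0 - b k))"
        by (elim exE)
      have inj: "inj_on W K"
      proof (rule inj_onI)
        fix k l assume k: "k \<in> K" and l: "l \<in> K" and eq: "W k = W l"
        define sk where "sk = D - (b k0 - b k)"
        define sl where "sl = D - (b k0 - b l)"
        have Wk: "\<forall>i<sk. W k i = x i" "W k sk \<noteq> x sk" using bspec[OF W k] unfolding sk_def by auto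
        have Wl: "\<forall>i<sl. W l i = x i" "W l sl \<noteq> x sl" using bspec[OF W l] unfolding sl_def by auto
        have "sk = sl"
        proof (rule ccontr)
          assume "sk \<noteq> sl"
          then consider "sk < sl" | "sl < sk" by linarith
          then show False
          proof cases
            case 1
            then have "W l sk = x sk" using Wl(1) by blast
            then show False using Wk(2) eq by simp
          next
            case 2
            then have "W k sl = x sl" using Wk(1) by blast
            then show False using Wl(2) eq by simp
          qed
        qed
        then have "b k = b l" unfolding sk_def sl_def by simp
        then show "k = l" using bmono[of k l] bmono[of l k] by (cases k l rule: linorder_cases) auto
      qed
      have "W ` K \<subseteq> {w\<in>X. f w = f x}" using W by auto
      moreover have "finite {w\<in>X. f w = f x}"
        using assms(6) fm x unfolding finite_to_one_def factor_map_def by blast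
      ultimately have "finite (W ` K)" using finite_subset by blast
      then have "finite K" using finite_imageD[OF _ inj] by blast
      then show False using Kinf by blast
    qed
  qed
qed


end
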